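(* Let $\Gamma$ be a set and $\Lambda:\Gamma\to\mathbb R^{m\times m}$ with sparsity pattern $S$. Let $L\in\mathbb R^{m\times m}$ be invertible and let $\hat S$ be the sparsity pattern of $\hat\Lambda(\cdot):=L^\top\Lambda(\cdot)L$. Let $\sigma$ be a permutation of $\{1,\dots,m\}$ with $L_{i,\sigma(i)}\neq0$ for all $i$ (such a $\sigma$ exists since $L$ is invertible) and $P$ its permutation matrix, $Pe_i=e_{\sigma(i)}$. Assume $\operatorname{span}(\Lambda(\Gamma))=\mathbb R^{m\times m}_S$. Then $S\subset P^\top\hat SP$ (as sets of nonzero entries). If moreover $\|\hat S\|_0\le\|S\|_0$, then $S=P^\top\hat SP$ and $L=CP^\top$ for some matrix $C$ that is both $S$-consistent and $S^\top$-consistent.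
   Context: Sparsity pattern: for $\Lambda:\Gamma\to\mathbb R^{m\times n}$, its sparsity pattern is the binary matrix $S$ with $S_{i,j}=1$ iff there exists $\gamma\in\Gamma$ with $\Lambda_{i,j}(\gamma)\neq0$. $\mathbb R^{m\times n}_B=\{M\in\mathbb R^{m\times n}: B_{ij}=0\Rightarrow M_{ij}=0\}$. $\|\cdot\|_0$ counts nonzero entries. $S$-consistency: for $S\in\{0,1\}^{m\times n}$, $C\in\mathbb R^{m\times m}$ is $S$-consistent iff for all $i,j$: $[\mathbb 1-S(\mathbb 1-S)^\top]^+_{i,j}=0\Rightarrow C_{i,j}=0$, with $[\cdot]^+=\max\{0,\cdot\}$ entrywise and $\mathbb 1$ an all-ones matrix of appropriate size. *)

theory Defs
  imports "HOL-Analysis.Analysis"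
begin

definition sparsity_pattern :: "'g set \<Rightarrow> ('g \<Rightarrow> real^'n^'m) \<Rightarrow> real^'n^'m" where
  "sparsity_pattern \<Gamma> \<Lambda> = (\<chi> i j. if \<exists>\<gamma>\<in>\<Gamma>. \<Lambda> \<gamma> $ i $ j \<noteq> 0 then 1 else 0)"

definition supported_on :: "real^'n^'m \<Rightarrow> (real^'n^'m) set" where
  "supported_on B = {M. \<forall>i j. B $ i $ j = 0 \<longrightarrow> M $ i $ j = 0}"

definition nnz :: "real^'n^'m \<Rightarrow> nat" where
  "nnz M = card {(i, j). M $ i $ j \<noteq> 0}"

definition perm_matrix :: "('m \<Rightarrow> 'm) \<Rightarrow> real^'m^'m" where
  "perm_matrix \<sigma> = (\<chi> r c. if r = \<sigma> c then 1 else 0)"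

definition S_consistent :: "real^'n^'m \<Rightarrow> real^'m^'m \<Rightarrow> bool" where
  "S_consistent S C \<longleftrightarrow>
     (let M = ((\<chi> i j. 1) :: real^'m^'m) - S ** transpose ((\<chi> i j. 1) - S)
      in \<forall>i j. max 0 (M $ i $ j) = 0 \<longrightarrow> C $ i $ j = 0)"

end

theory Submission
  imports Defs
begin

lemma mm_comp: "((A::real^'n^'m) ** (B::real^'k^'n)) $ i $ j = (\<Sum>k\<in>UNIV. A $ i $ k * B $ k $ j)"
  by (simp add: matrix_matrix_mult_def)

lemma tr_comp: "transpose (A::real^'n^'m) $ i $ j = A $ j $ i"
  by (simp add: transpose_def)

lemma perm_conj:
  assumes "bij \<sigma>"
  shows "(transpose (perm_matrix \<sigma>) ** (A::real^'m^'m) ** perm_matrix \<sigma>) $ i $ j = A $ \<sigma> i $ \<sigma> j"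
proof -
  have 1: "(A ** perm_matrix \<sigma>) $ r $ j = A $ r $ \<sigma> j" for r
    by (simp add: mm_comp perm_matrix_def if_distrib cong: if_cong)
  show ?thesis
    by (simp add: matrix_mul_assoc[symmetric] mm_comp tr_comp 1 perm_matrix_def
        if_distrib[of "\<lambda>x. x * y" for y] if_distrib[of "\<lambda>x. y * x" for y] cong: if_cong)
qed

lemma dsum: "(\<Sum>x\<in>(UNIV::'m::finite set). \<Sum>y\<in>(UNIV::'m set). if x = a \<and> y = b then c else 0) = (c::real)"
proof -
  have "(\<Sum>y\<in>(UNIV::'m set). if x = a \<and> y = b then c else 0) = (if x = a then c else 0)" for x
    by (cases "x = a") simp_all
  thus ?thesis by simp
qed

lemma key:
  fixes \<Lambda> :: "'g \<Rightarrow> real^'m^'m" and L :: "real^'m^'m"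
  assumes span_eq: "span (\<Lambda> ` \<Gamma>) = supported_on (sparsity_pattern \<Gamma> \<Lambda>)"
    and S: "sparsity_pattern \<Gamma> \<Lambda> $ a $ b \<noteq> 0"
    and La: "L $ a $ p \<noteq> 0" and Lb: "L $ b $ q \<noteq> 0"
  shows "sparsity_pattern \<Gamma> (\<lambda>\<gamma>. transpose L ** \<Lambda> \<gamma> ** L) $ p $ q \<noteq> 0"
proof (rule ccontr)
  assume "\<not> ?thesis"
  hence z: "\<forall>\<gamma>\<in>\<Gamma>. (transpose L ** \<Lambda> \<gamma> ** L) $ p $ q = 0"
    by (auto simp: sparsity_pattern_def split: if_splits)
  define g where "g M = (\<Sum>x\<in>UNIV. \<Sum>y\<in>UNIV. L $ x $ p * M $ x $ y * L $ y $ q)" for M :: "real^'m^'m"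
  have gf: "(transpose L ** M ** L) $ p $ q = g M" for M
    by (simp add: g_def mm_comp tr_comp sum_distrib_left sum_distrib_right mult.assoc)
      (rule sum.swap)
  have sub: "subspace {M. g M = 0}"
    unfolding subspace_def
    by (simp add: g_def algebra_simps sum.distrib sum_distrib_left[symmetric])
  have "\<forall>M\<in>span (\<Lambda> ` \<Gamma>). g M = 0"
  proof
    fix M assume "M \<in> span (\<Lambda> ` \<Gamma>)"
    show "g M = 0"
      by (rule span_induct[where P="\<lambda>M. g M = 0", OF \<open>M \<in> span (\<Lambda> ` \<Gamma>)\<close> sub])
        (use z gf in auto)
  qed
  moreover define E where "E = (\<chi> i j. if i = a \<and> j = b then 1 else (0::real))"
  have "E \<in> span (\<Lambda> ` \<Gamma>)" unfolding span_eq supported_on_def E_def using S by auto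
  ultimately have "g E = 0" by auto
  moreover have "g E = L $ a $ p * L $ b $ q"
    by (simp add: g_def E_def if_distrib[of "\<lambda>x. u * x * v" for u v] cong: if_cong)
      (rule dsum)
  ultimately show False using La Lb by simp
qed

lemma sp01: "sparsity_pattern \<Gamma> \<Lambda> $ i $ j = 0 \<or> sparsity_pattern \<Gamma> \<Lambda> $ i $ j = 1"
  by (simp add: sparsity_pattern_def)

theorem mainTheorem3:
  fixes \<Gamma> :: "'g set"
    and \<Lambda> :: "'g \<Rightarrow> real^'m^'m"
    and L :: "real^'m^'m"
    and \<sigma> :: "'m \<Rightarrow> 'm"
  assumes L_inv: "invertible L"
    and \<sigma>_perm: "bij \<sigma>"
    and L_\<sigma>: "\<forall>i. L $ i $ \<sigma> i \<noteq> 0"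
    and span_eq: "span (\<Lambda> ` \<Gamma>) = supported_on (sparsity_pattern \<Gamma> \<Lambda>)"
  shows "(let S = sparsity_pattern \<Gamma> \<Lambda>;
              S' = sparsity_pattern \<Gamma> (\<lambda>\<gamma>. transpose L ** \<Lambda> \<gamma> ** L);
              P = perm_matrix \<sigma>
          in (\<forall>i j. S $ i $ j \<noteq> 0 \<longrightarrow> (transpose P ** S' ** P) $ i $ j \<noteq> 0)
             \<and> (nnz S' \<le> nnz S \<longrightarrow>
                  S = transpose P ** S' ** P
                  \<and> (\<exists>C. L = C ** transpose P \<and> S_consistent S C \<and> S_consistent (transpose S) C)))"
proof -
  define S where "S = sparsity_pattern \<Gamma> \<Lambda>"
  define S' where "S' = sparsity_pattern \<Gamma> (\<lambda>\<gamma>. transpose L ** \<Lambda> \<gamma> ** L)"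
  define P where "P = perm_matrix \<sigma>"
  have K: "S $ a $ b \<noteq> 0 \<Longrightarrow> L $ a $ p \<noteq> 0 \<Longrightarrow> L $ b $ q \<noteq> 0 \<Longrightarrow> S' $ p $ q \<noteq> 0" for a b p q
    unfolding S_def S'_def using key[OF span_eq] by blast
  have PC: "(transpose P ** S' ** P) $ i $ j = S' $ \<sigma> i $ \<sigma> j" for i j
    unfolding P_def by (rule perm_conj[OF \<sigma>_perm])
  have part1: "\<forall>i j. S $ i $ j \<noteq> 0 \<longrightarrow> (transpose P ** S' ** P) $ i $ j \<noteq> 0"
    using K L_\<sigma> PC by auto
  have part2: "S = transpose P ** S' ** P
                  \<and> (\<exists>C. L = C ** transpose P \<and> S_consistent S C \<and> S_consistent (transpose S) C)"
    if nn: "nnz S' \<le> nnz S"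
  proof -
    define A where "A = {(i, j). S $ i $ j \<noteq> 0}"
    define B where "B = {(i, j). S' $ i $ j \<noteq> 0}"
    define h where "h = (\<lambda>(i,j). (\<sigma> i, \<sigma> j))"
    have injh: "inj h" using \<sigma>_perm unfolding h_def bij_def inj_def by auto
    have hA: "h ` A \<subseteq> B" using K L_\<sigma> unfolding A_def B_def h_def by auto
    have cardA: "card (h ` A) = card A" using injh by (simp add: card_image inj_on_subset)
    have "card B \<le> card A" using nn unfolding nnz_def A_def B_def by simp
    hence eq: "h ` A = B"
      using card_subset_eq[OF _ hA] cardA card_mono[OF _ hA] by simp
    have iff: "S' $ \<sigma> i $ \<sigma> j \<noteq> 0 \<longleftrightarrow> S $ i $ j \<noteq> 0" for i j
    proof
      assume "S' $ \<sigma> i $ \<sigma> j \<noteq> 0"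
      hence "h (i,j) \<in> h ` A" using eq unfolding B_def h_def by auto
      thus "S $ i $ j \<noteq> 0" using injh unfolding A_def by (auto dest: injD)
    next
      assume "S $ i $ j \<noteq> 0" thus "S' $ \<sigma> i $ \<sigma> j \<noteq> 0" using K L_\<sigma> by blast
    qed
    have Seq: "S $ i $ j = S' $ \<sigma> i $ \<sigma> j" for i j
      using iff[of i j] sp01[of \<Gamma> \<Lambda> i j] sp01[of \<Gamma> "\<lambda>\<gamma>. transpose L ** \<Lambda> \<gamma> ** L" "\<sigma> i" "\<sigma> j"]
      unfolding S_def S'_def by auto
    have E1: "S = transpose P ** S' ** P" by (simp add: vec_eq_iff PC Seq)
    define C where "C = (\<chi> i j. L $ i $ \<sigma> j)"
    have CL: "L = C ** transpose P"
    proof -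
      have "(C ** transpose P) $ i $ j = L $ i $ j" for i j
      proof -
        have "(C ** transpose P) $ i $ j = (\<Sum>k\<in>UNIV. (\<lambda>r. L $ i $ r * (if j = r then 1 else 0)) (\<sigma> k))"
          by (simp add: mm_comp tr_comp C_def P_def perm_matrix_def)
        also have "\<dots> = (\<Sum>r\<in>UNIV. L $ i $ r * (if j = r then 1 else 0))"
          using sum.reindex_bij_betw[of \<sigma> UNIV UNIV] \<sigma>_perm by (simp add: bij_def bij_betw_def)
        also have "\<dots> = L $ i $ j" by (simp add: if_distrib cong: if_cong)
        finally show ?thesis .
      qed
      thus ?thesis by (simp add: vec_eq_iff)
    qed
    have Cc: "C $ i $ j = L $ i $ \<sigma> j" for i j by (simp add: C_def)
    have S01: "S $ i $ j = 0 \<or> S $ i $ j = 1" for i j unfolding S_def by (rule sp01)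
    have c1: "S_consistent S C"
      unfolding S_consistent_def Let_def
    proof (intro allI impI)
      fix i j
      assume m: "max 0 (((\<chi> i j. 1) - S ** transpose ((\<chi> i j. 1) - S)) $ i $ j) = (0::real)"
      show "C $ i $ j = 0"
      proof (rule ccontr)
        assume c: "C $ i $ j \<noteq> 0"
        have "\<forall>k. S $ i $ k * (1 - S $ j $ k) = 0"
        proof
          fix k
          show "S $ i $ k * (1 - S $ j $ k) = 0"
          proof (cases "S $ i $ k = 0")
            case False
            hence "S' $ \<sigma> j $ \<sigma> k \<noteq> 0" using K[OF False] c Cc L_\<sigma> by metis
            hence "S $ j $ k = 1" using Seq S01 by metis
            thus ?thesis by simp
          qed simp
        qed
        hence "(\<Sum>k\<in>UNIV. S $ i $ k * (1 - S $ j $ k)) = 0" by (metis (no_types, lifting) sum.neutral)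
        moreover have "(S ** transpose ((\<chi> i j. 1) - S)) $ i $ j = (\<Sum>k\<in>UNIV. S $ i $ k * (1 - S $ j $ k))"
          by (simp add: mm_comp tr_comp)
        ultimately have "(S ** transpose ((\<chi> i j. 1) - S)) $ i $ j = 0" by simp
        thus False using m by simp
      qed
    qed
    have c2: "S_consistent (transpose S) C"
      unfolding S_consistent_def Let_def
    proof (intro allI impI)
      fix i j
      assume m: "max 0 (((\<chi> i j. 1) - transpose S ** transpose ((\<chi> i j. 1) - transpose S)) $ i $ j) = (0::real)"
      show "C $ i $ j = 0"
      proof (rule ccontr)
        assume c: "C $ i $ j \<noteq> 0"
        have "\<forall>k. S $ k $ i * (1 - S $ k $ j) = 0"
        proof
          fix k
          show "S $ k $ i * (1 - S $ k $ j) = 0"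
          proof (cases "S $ k $ i = 0")
            case False
            hence "S' $ \<sigma> k $ \<sigma> j \<noteq> 0" using K[OF False] c Cc L_\<sigma> by metis
            hence "S $ k $ j = 1" using Seq S01 by metis
            thus ?thesis by simp
          qed simp
        qed
        hence "(\<Sum>k\<in>UNIV. S $ k $ i * (1 - S $ k $ j)) = 0" by (metis (no_types, lifting) sum.neutral)
        moreover have "(transpose S ** transpose ((\<chi> i j. 1) - transpose S)) $ i $ j = (\<Sum>k\<in>UNIV. S $ k $ i * (1 - S $ k $ j))"
          by (simp add: mm_comp tr_comp)
        ultimately have "(transpose S ** transpose ((\<chi> i j. 1) - transpose S)) $ i $ j = 0" by simp
        thus False using m by simp
      qed
    qed
    show ?thesis using E1 CL c1 c2 by blast
  qed
  show ?thesis unfolding Let_def S_def[symmetric] S'_def[symmetric] P_def[symmetric]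
    using part1 part2 by blast
qed

end
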